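(* (i) Let $h:\omega\to\omega\setminus\{0,1\}$ be nondecreasing and $g(n)=h(2n)$. Then $\mathfrak d(\neq^*,h)=\mathfrak d(\neq^*,g)$ and $\mathfrak b(\neq^*,h)=\mathfrak b(\neq^*,g)$. (ii) For all real numbers $a,b>1$, $\mathfrak d(\neq^*,n\mapsto2^{(a^n)})=\mathfrak d(\neq^*,n\mapsto2^{(b^n)})$ and $\mathfrak b(\neq^*,n\mapsto2^{(a^n)})=\mathfrak b(\neq^*,n\mapsto2^{(b^n)})$.
   Context: For a function $h$, a function $y:\omega\to\omega$ is $h$-bounded if $y(n)<h(n)$ for all $n$. $\mathfrak d(\neq^*,h)$ is the least cardinality of a set $G$ of $h$-bounded functions such that for every $x\in{}^\omega\omega$ there is $y\in G$ with $x(n)\neq y(n)$ for all but finitely many $n$. $\mathfrak b(\neq^*,h)$ is the least cardinality of a set $F\subseteq{}^\omega\omega$ such that for every $h$-bounded $y$ there is $x\in F$ with $x(n)=y(n)$ for infinitely many $n$. The statements are theorems of ZFC. *)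

theory Defs
  imports Complex_Main
begin

definition h_bounded :: "(nat \<Rightarrow> nat) \<Rightarrow> (nat \<Rightarrow> nat) \<Rightarrow> bool" where
  "h_bounded h y \<longleftrightarrow> (\<forall>n. y n < h n)"

definition neq_ae :: "(nat \<Rightarrow> nat) \<Rightarrow> (nat \<Rightarrow> nat) \<Rightarrow> bool" where
  "neq_ae x y \<longleftrightarrow> finite {n. x n = y n}"

definition d_family :: "(nat \<Rightarrow> nat) \<Rightarrow> (nat \<Rightarrow> nat) set \<Rightarrow> bool" where
  "d_family h G \<longleftrightarrow> (\<forall>y\<in>G. h_bounded h y) \<and> (\<forall>x. \<exists>y\<in>G. neq_ae x y)"

definition b_family :: "(nat \<Rightarrow> nat) \<Rightarrow> (nat \<Rightarrow> nat) set \<Rightarrow> bool" where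
  "b_family h F \<longleftrightarrow> (\<forall>y. h_bounded h y \<longrightarrow> (\<exists>x\<in>F. infinite {n. x n = y n}))"

text \<open>d(neq*,h) \<le> d(neq*,g): every witness family for g is matched in cardinality
  by a witness family for h of no larger cardinality (comparison of least cardinalities).\<close>
definition d_le :: "(nat \<Rightarrow> nat) \<Rightarrow> (nat \<Rightarrow> nat) \<Rightarrow> bool" where
  "d_le h g \<longleftrightarrow> (\<forall>G. d_family g G \<longrightarrow>
      (\<exists>G'. d_family h G' \<and> (card_of G', card_of G) \<in> ordLeq))"

definition b_le :: "(nat \<Rightarrow> nat) \<Rightarrow> (nat \<Rightarrow> nat) \<Rightarrow> bool" where
  "b_le h g \<longleftrightarrow> (\<forall>F. b_family g F \<longrightarrow>
      (\<exists>F'. b_family h F' \<and> (card_of F', card_of F) \<in> ordLeq))"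

definition d_eq :: "(nat \<Rightarrow> nat) \<Rightarrow> (nat \<Rightarrow> nat) \<Rightarrow> bool" where
  "d_eq h g \<longleftrightarrow> d_le h g \<and> d_le g h"

definition b_eq :: "(nat \<Rightarrow> nat) \<Rightarrow> (nat \<Rightarrow> nat) \<Rightarrow> bool" where
  "b_eq h g \<longleftrightarrow> b_le h g \<and> b_le g h"

text \<open>The natural-number bound equivalent to the real bound 2^(a^n):
  for natural y, y < 2 powr (a^n) iff y < ceiling (2 powr (a^n)).\<close>
definition dexp :: "real \<Rightarrow> nat \<Rightarrow> nat" where
  "dexp a n = nat \<lceil>2 powr (a ^ n)\<rceil>"

end

theory Submission
  imports Defs
begin

lemma d_family_infinite:
  assumes "d_family g G" shows "infinite G"
proof
  assume fin: "finite G"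
  obtain m f where Gf: "G = f ` {i. i < (m::nat)}"
    using finite_imp_nat_seg_image_inj_on[OF fin] by blast
  obtain y0 where "y0 \<in> G" using assms unfolding d_family_def by blast
  then have mpos: "m > 0" using Gf by auto
  define x where "x n = f (n mod m) n" for n
  obtain y where yG: "y \<in> G" and ne: "neq_ae x y" using assms unfolding d_family_def by blast
  obtain i where i: "i < m" "y = f i" using yG Gf by auto
  have "range (\<lambda>j. i + m * j) \<subseteq> {n. x n = y n}"
    using i mpos by (auto simp: x_def)
  moreover have "inj (\<lambda>j::nat. i + m * j)" using mpos by (auto simp: inj_def)
  then have "infinite (range (\<lambda>j. i + m * j))" using finite_imageD by (metis infinite_UNIV_nat)
  ultimately have "infinite {n. x n = y n}" using infinite_super by blast
  then show False using ne unfolding neq_ae_def by blast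
qed

lemma d_le_trans: "d_le h g \<Longrightarrow> d_le g k \<Longrightarrow> d_le h k"
  unfolding d_le_def by (meson ordLeq_transitive)

lemma b_le_trans: "b_le h g \<Longrightarrow> b_le g k \<Longrightarrow> b_le h k"
  unfolding b_le_def by (meson ordLeq_transitive)

lemma le_refl_card: "(card_of A, card_of A) \<in> ordLeq"
  by (simp add: card_of_mono1)

lemma d_le_mono: assumes "\<And>n. h n \<le> h' n" shows "d_le h' h"
  unfolding d_le_def
proof (intro allI impI)
  fix G assume "d_family h G"
  then have "d_family h' G" using assms unfolding d_family_def h_bounded_def
    by (meson less_le_trans)
  then show "\<exists>G'. d_family h' G' \<and> (card_of G', card_of G) \<in> ordLeq"
    using le_refl_card by blast
qed

lemma b_le_mono: assumes "\<And>n. h n \<le> h' n" shows "b_le h h'"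
  unfolding b_le_def
proof (intro allI impI)
  fix F assume "b_family h' F"
  then have "b_family h F" using assms unfolding b_family_def h_bounded_def
    by (meson less_le_trans)
  then show "\<exists>F'. b_family h F' \<and> (card_of F', card_of F) \<in> ordLeq"
    using le_refl_card by blast
qed

lemma d_le_double:
  assumes mono: "mono h"
  shows "d_le h (\<lambda>n. h (2 * n))"
  unfolding d_le_def
proof (intro allI impI)
  fix G assume G: "d_family (\<lambda>n. h (2 * n)) G"
  define c where "c = (\<lambda>(y1::nat\<Rightarrow>nat, y2::nat\<Rightarrow>nat). \<lambda>k::nat. if even k then y1 (k div 2) else y2 (k div 2))"
  define G' where "G' = c ` (G \<times> G)"
  have "d_family h G'"
    unfolding d_family_def
  proof (intro conjI ballI allI)
    fix z assume "z \<in> G'"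
    then obtain y1 y2 where y: "y1 \<in> G" "y2 \<in> G" "z = c (y1, y2)" unfolding G'_def by auto
    show "h_bounded h z" unfolding h_bounded_def
    proof
      fix k
      have le: "h (2 * (k div 2)) \<le> h k" using mono by (simp add: monoD)
      show "z k < h k"
      proof (cases "even k")
        case True
        then have "z k = y1 (k div 2)" using y by (simp add: c_def)
        also have "\<dots> < h (2 * (k div 2))" using G y(1) unfolding d_family_def h_bounded_def by blast
        finally show ?thesis using le by linarith
      next
        case False
        then have "z k = y2 (k div 2)" using y by (simp add: c_def)
        also have "\<dots> < h (2 * (k div 2))" using G y(2) unfolding d_family_def h_bounded_def by blast
        finally show ?thesis using le by linarith
      qed
    qed
  next
    fix x :: "nat \<Rightarrow> nat"
    obtain y1 where y1: "y1 \<in> G" "neq_ae (\<lambda>n. x (2*n)) y1" using G unfolding d_family_def by blast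
    obtain y2 where y2: "y2 \<in> G" "neq_ae (\<lambda>n. x (2*n+1)) y2" using G unfolding d_family_def by blast
    have "{k. x k = c (y1, y2) k} \<subseteq> (\<lambda>n. 2*n) ` {n. x (2*n) = y1 n} \<union> (\<lambda>n. 2*n+1) ` {n. x (2*n+1) = y2 n}"
    proof
      fix k assume "k \<in> {k. x k = c (y1, y2) k}"
      then have eq: "x k = c (y1, y2) k" by simp
      show "k \<in> (\<lambda>n. 2*n) ` {n. x (2*n) = y1 n} \<union> (\<lambda>n. 2*n+1) ` {n. x (2*n+1) = y2 n}"
      proof (cases "even k")
        case True
        then have "k = 2 * (k div 2)" by simp
        then show ?thesis using eq True by (auto simp: c_def intro!: image_eqI[where x="k div 2"])
      next
        case False
        then have "k = 2 * (k div 2) + 1" by simp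
        then show ?thesis using eq False by (auto simp: c_def intro!: image_eqI[where x="k div 2"])
      qed
    qed
    then have "neq_ae x (c (y1, y2))" using y1 y2 unfolding neq_ae_def
      by (meson finite_UnI finite_imageI finite_subset)
    moreover have "c (y1, y2) \<in> G'" using y1 y2 unfolding G'_def by auto
    ultimately show "\<exists>y\<in>G'. neq_ae x y" by blast
  qed
  moreover have "(card_of G', card_of G) \<in> ordLeq"
  proof -
    have "(card_of G', card_of (G \<times> G)) \<in> ordLeq" unfolding G'_def by (rule card_of_image)
    moreover have "(card_of (G \<times> G), card_of G) \<in> ordIso"
      using card_of_Times_same_infinite d_family_infinite[OF G] by blast
    ultimately show ?thesis using ordLeq_ordIso_trans by blast
  qed
  ultimately show "\<exists>G'. d_family h G' \<and> (card_of G', card_of G) \<in> ordLeq" by blast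
qed

lemma mono_bounded_evconst:
  assumes mono: "mono (h::nat\<Rightarrow>nat)" and B: "\<And>n. h n \<le> m"
  shows "\<exists>N. \<forall>n\<ge>N. h n = h N"
proof -
  have fin: "finite (range h)" using B by (meson finite_atMost finite_subset image_subsetI atMost_iff)
  obtain N where N: "h N = Max (range h)" using Max_in[OF fin] by auto
  have "\<forall>n\<ge>N. h n = h N"
  proof (intro allI impI)
    fix n assume "n \<ge> N"
    then have "h N \<le> h n" using mono by (simp add: monoD)
    moreover have "h n \<le> h N" using N fin by simp
    ultimately show "h n = h N" by simp
  qed
  then show ?thesis by blast
qed

lemma b_family_infinite:
  assumes F: "b_family h F" and unb: "\<And>m. \<exists>N. h N > m" and mono: "mono h" and pos: "\<And>n. h n \<ge> 2"
  shows "infinite F"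
proof
  assume fin: "finite F"
  define m where "m = card F"
  obtain N where N: "h N > m" using unb by blast
  define y where "y n = (if n < N then 0 else (LEAST v. v \<notin> (\<lambda>x. x n) ` F))" for n
  have ex: "\<exists>v\<le>m. v \<notin> (\<lambda>x. x n) ` F" for n
  proof (rule ccontr)
    assume "\<not> ?thesis"
    then have "{0..m} \<subseteq> (\<lambda>x. x n) ` F" by auto
    then have "card {0..m} \<le> card ((\<lambda>x. x n) ` F)" using fin by (metis card_mono finite_imageI)
    also have "\<dots> \<le> m" unfolding m_def using fin by (rule card_image_le)
    finally show False by simp
  qed
  have yb: "h_bounded h y" unfolding h_bounded_def
  proof
    fix n show "y n < h n"
    proof (cases "n < N")
      case True then show ?thesis using pos[of n] by (simp add: y_def)
    next
      case False
      obtain v where v: "v \<le> m" "v \<notin> (\<lambda>x. x n) ` F" using ex by blast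
      have "y n \<le> v" using False v(2) by (simp add: y_def Least_le)
      moreover have "h N \<le> h n" using False mono by (simp add: monoD)
      ultimately show ?thesis using v(1) N by linarith
    qed
  qed
  obtain x where x: "x \<in> F" "infinite {n. x n = y n}" using F yb unfolding b_family_def by blast
  have "{n. x n = y n} \<subseteq> {..<N}"
  proof
    fix n assume "n \<in> {n. x n = y n}"
    then have eq: "x n = y n" by simp
    show "n \<in> {..<N}"
    proof (rule ccontr)
      assume "n \<notin> {..<N}"
      then have "y n = (LEAST v. v \<notin> (\<lambda>x. x n) ` F)" by (simp add: y_def)
      moreover have "(LEAST v. v \<notin> (\<lambda>x. x n) ` F) \<notin> (\<lambda>x. x n) ` F"
        using ex[of n] by (metis (mono_tags, lifting) LeastI)
      ultimately show False using eq x(1) by (metis image_eqI)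
    qed
  qed
  then show False using x(2) finite_subset by blast
qed

lemma b_le_double:
  assumes mono: "mono h" and pos: "\<And>n. h n \<ge> 2"
  shows "b_le (\<lambda>n. h (2 * n)) h"
  unfolding b_le_def
proof (intro allI impI)
  fix F assume F: "b_family h F"
  show "\<exists>F'. b_family (\<lambda>n. h (2 * n)) F' \<and> (card_of F', card_of F) \<in> ordLeq"
  proof (cases "\<forall>m. \<exists>N. h N > m")
    case False
    then obtain m where "\<And>n. h n \<le> m" by (meson not_le)
    then obtain N where N: "\<And>n. n \<ge> N \<Longrightarrow> h n = h N" using mono_bounded_evconst[OF mono] by blast
    have "b_family (\<lambda>n. h (2 * n)) F" unfolding b_family_def
    proof (intro allI impI)
      fix y assume yb: "h_bounded (\<lambda>n. h (2 * n)) y"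
      define z where "z n = (if n < N then 0 else y n)" for n
      have "h_bounded h z" unfolding h_bounded_def
      proof
        fix n show "z n < h n"
        proof (cases "n < N")
          case True then show ?thesis using pos[of n] by (simp add: z_def)
        next
          case False
          then have "h (2*n) = h n" using N[of n] N[of "2*n"] by simp
          then show ?thesis using False yb unfolding z_def h_bounded_def by metis
        qed
      qed
      then obtain x where x: "x \<in> F" "infinite {n. x n = z n}" using F unfolding b_family_def by blast
      have "{n. x n = z n} \<subseteq> {n. x n = y n} \<union> {..<N}" by (auto simp: z_def)
      then have "infinite {n. x n = y n}" using x(2) by (meson finite_Un finite_lessThan finite_subset)
      then show "\<exists>x\<in>F. infinite {n. x n = y n}" using x(1) by blast
    qed
    then show ?thesis using le_refl_card by blast
  next
    case True
    then have inf: "infinite F" using b_family_infinite[OF F _ mono pos] by blast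
    define F' where "F' = (\<lambda>x n. x (2*n)) ` F \<union> (\<lambda>x n. x (2*n+1)) ` F"
    have "b_family (\<lambda>n. h (2 * n)) F'" unfolding b_family_def
    proof (intro allI impI)
      fix y assume yb: "h_bounded (\<lambda>n. h (2 * n)) y"
      define z where "z k = y (k div 2)" for k
      have "h_bounded h z" unfolding h_bounded_def
      proof
        fix k
        have "h (2 * (k div 2)) \<le> h k" using mono by (simp add: monoD)
        moreover have "y (k div 2) < h (2 * (k div 2))" using yb by (simp add: h_bounded_def)
        ultimately show "z k < h k" by (simp add: z_def)
      qed
      then obtain x where x: "x \<in> F" "infinite {k. x k = z k}" using F unfolding b_family_def by blast
      have sub: "{k. x k = z k} \<subseteq> (\<lambda>n. 2*n) ` {n. x (2*n) = y n} \<union> (\<lambda>n. 2*n+1) ` {n. x (2*n+1) = y n}"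
      proof
        fix k assume "k \<in> {k. x k = z k}"
        then have eq: "x k = y (k div 2)" by (simp add: z_def)
        show "k \<in> (\<lambda>n. 2*n) ` {n. x (2*n) = y n} \<union> (\<lambda>n. 2*n+1) ` {n. x (2*n+1) = y n}"
        proof (cases "even k")
          case True
          then have "k = 2 * (k div 2)" by simp
          then show ?thesis using eq by (auto intro!: image_eqI[where x="k div 2"])
        next
          case False
          then have "k = 2 * (k div 2) + 1" by simp
          then show ?thesis using eq by (auto intro!: image_eqI[where x="k div 2"])
        qed
      qed
      have "infinite {n. x (2*n) = y n} \<or> infinite {n. x (2*n+1) = y n}"
        using x(2) sub by (meson finite_UnI finite_imageI finite_subset)
      then show "\<exists>x\<in>F'. infinite {n. x n = y n}"
      proof
        assume "infinite {n. x (2*n) = y n}"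
        moreover have "(\<lambda>n. x (2*n)) \<in> F'" using x(1) unfolding F'_def by blast
        ultimately show ?thesis by force
      next
        assume "infinite {n. x (2*n+1) = y n}"
        moreover have "(\<lambda>n. x (2*n+1)) \<in> F'" using x(1) unfolding F'_def by blast
        ultimately show ?thesis by force
      qed
    qed
    moreover have "(card_of F', card_of F) \<in> ordLeq"
      unfolding F'_def
      by (rule card_of_Un_ordLeq_infinite_Field) (auto simp: Field_card_of inf card_of_image card_of_card_order_on)
    ultimately show ?thesis by blast
  qed
qed

lemma iter_double:
  assumes mono: "mono h" and pos: "\<And>n. h n \<ge> 2"
  shows "d_le h (\<lambda>n. h (2^k * n)) \<and> b_le (\<lambda>n. h (2^k * n)) h"
proof (induction k)
  case 0
  show ?case using d_le_mono[of h h] b_le_mono[of h h] by simp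
next
  case (Suc k)
  define H where "H = (\<lambda>n. h (2^k * n))"
  have mH: "mono H" unfolding H_def using mono by (simp add: mono_def)
  have pH: "\<And>n. H n \<ge> 2" unfolding H_def using pos by simp
  have eq: "(\<lambda>n. h (2^Suc k * n)) = (\<lambda>n. H (2 * n))" unfolding H_def by (simp add: mult.assoc mult.commute mult.left_commute)
  show ?case unfolding eq
    using Suc.IH d_le_double[OF mH] b_le_double[OF mH pH] d_le_trans b_le_trans
    unfolding H_def by blast
qed

lemma dexp_ge2: assumes "a > 1" shows "dexp a n \<ge> 2"
proof -
  have "a ^ n \<ge> 1" using assms by simp
  then have "2 powr (a ^ n) \<ge> 2 powr 1" by (rule powr_mono) simp
  then have "\<lceil>2 powr (a ^ n)\<rceil> \<ge> 2" by (simp add: le_ceiling_iff)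
  then show ?thesis unfolding dexp_def by linarith
qed

lemma dexp_le: assumes "1 \<le> b" "b \<le> c" shows "dexp b n \<le> dexp c n"
proof -
  have "b ^ n \<le> c ^ n" using assms by (simp add: power_mono)
  then have "2 powr (b ^ n) \<le> 2 powr (c ^ n)" by (rule powr_mono) simp
  then show ?thesis unfolding dexp_def by (intro nat_mono ceiling_mono)
qed

lemma dexp_mono: assumes "a > 1" shows "mono (dexp a)"
proof (rule monoI)
  fix n m :: nat assume "n \<le> m"
  then have "a ^ n \<le> a ^ m" using assms by (simp add: power_increasing)
  then have "2 powr (a ^ n) \<le> 2 powr (a ^ m)" by (rule powr_mono) simp
  then show "dexp a n \<le> dexp a m" unfolding dexp_def by (intro nat_mono ceiling_mono)
qed

lemma dexp_pow: "dexp (a ^ (2^k)) n = dexp a (2^k * n)"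
  unfolding dexp_def by (simp add: power_mult)

lemma dexp_main:
  assumes a: "a > 1" and b: "b > 1"
  shows "d_le (dexp a) (dexp b) \<and> b_le (dexp b) (dexp a)"
proof -
  obtain k where k: "b < a ^ k" using real_arch_pow[OF a] by blast
  have "k \<le> 2^k" by (simp add: less_imp_le)
  then have "a ^ k \<le> a ^ (2^k)" using a by (simp add: power_increasing)
  define c where "c = a ^ (2^k)"
  have bc: "b \<le> c" using k \<open>a ^ k \<le> a ^ (2^k)\<close> unfolding c_def by linarith
  have it: "d_le (dexp a) (dexp c) \<and> b_le (dexp c) (dexp a)"
    using iter_double[OF dexp_mono[OF a] dexp_ge2[OF a], of k] unfolding c_def dexp_pow by simp
  have "d_le (dexp c) (dexp b)" by (rule d_le_mono) (rule dexp_le, use b bc in auto)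
  moreover have "b_le (dexp b) (dexp c)" by (rule b_le_mono) (rule dexp_le, use b bc in auto)
  ultimately show ?thesis using it d_le_trans b_le_trans by blast
qed

theorem mainTheorem7:
  shows "(\<forall>h :: nat \<Rightarrow> nat. (\<forall>n. h n \<ge> 2) \<and> mono h \<longrightarrow>
            d_eq h (\<lambda>n. h (2 * n)) \<and> b_eq h (\<lambda>n. h (2 * n)))
       \<and> (\<forall>a b :: real. a > 1 \<and> b > 1 \<longrightarrow>
            d_eq (dexp a) (dexp b) \<and> b_eq (dexp a) (dexp b))"
proof (intro conjI allI impI)
  fix h :: "nat \<Rightarrow> nat" assume H: "(\<forall>n. h n \<ge> 2) \<and> mono h"
  then have m: "mono h" and p: "\<And>n. h n \<ge> 2" by auto
  have le: "\<And>n. h n \<le> h (2 * n)" using m by (simp add: monoD)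
  show "d_eq h (\<lambda>n. h (2 * n))" unfolding d_eq_def
    using d_le_double[OF m] d_le_mono[of h "\<lambda>n. h (2*n)", OF le] by blast
  show "b_eq h (\<lambda>n. h (2 * n))" unfolding b_eq_def
    using b_le_double[OF m p] b_le_mono[of h "\<lambda>n. h (2*n)", OF le] by blast
next
  fix a b :: real assume "a > 1 \<and> b > 1"
  then have a: "a > 1" and b: "b > 1" by auto
  show "d_eq (dexp a) (dexp b)" unfolding d_eq_def using dexp_main[OF a b] dexp_main[OF b a] by blast
  show "b_eq (dexp a) (dexp b)" unfolding b_eq_def using dexp_main[OF a b] dexp_main[OF b a] by blast
qed

end
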